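(* Let $A\in\mathscr{C}^-$, $B\in\mathscr{C}$ and $f\in\mathscr{C}(A,B)$. Choose a distinguished triangle $S_A[-1]\overset{s_A}{\to}A\overset{w_A}{\to}W_A\to S_A$ with $S_A\in\mathcal{S}$, $W_A\in\mathcal{W}$, and then a distinguished triangle $S_A[-1]\overset{f\circ s_A}{\to}B\overset{m_f}{\to}M_f\to S_A$. Then: (1) $\underline{m}_f\circ\underline{f}=0$ in $\underline{\mathscr{C}}$; (2) for every $Y\in\mathscr{C}^+$, composition with $\underline{m}_f$ gives a bijection \[ -\circ\underline{m}_f\colon\underline{\mathscr{C}}(M_f,Y)\to\{\beta\in\underline{\mathscr{C}}(B,Y)\mid\beta\circ\underline{f}=0\}; \] (3) if $B\in\mathscr{C}^-$, then $M_f\in\mathscr{C}^-$.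
   Context: $\mathscr{C}$ is a triangulated category with shift $[1]$; subcategories are full, additive, closed under isomorphisms and direct summands. $\mathrm{Ext}^1(X,Y)=\mathscr{C}(X,Y[1])$. $\mathcal{M}\ast\mathcal{N}$ is the full subcategory of objects $C$ admitting a distinguished triangle $M\to C\to N\to M[1]$ with $M\in\mathcal{M}$, $N\in\mathcal{N}$. A cotorsion pair $(\mathcal{U},\mathcal{V})$: $\mathrm{Ext}^1(\mathcal{U},\mathcal{V})=0$ and $\mathscr{C}=\mathcal{U}\ast\mathcal{V}[1]$. Fix a twin cotorsion pair, i.e. cotorsion pairs $(\mathcal{S},\mathcal{T}),(\mathcal{U},\mathcal{V})$ with $\mathrm{Ext}^1(\mathcal{S},\mathcal{V})=0$. Put $\mathcal{W}=\mathcal{T}\cap\mathcal{U}$, $\mathscr{C}^-=\mathcal{S}[-1]\ast\mathcal{W}$, $\mathscr{C}^+=\mathcal{W}\ast\mathcal{V}[1]$. $\underline{\mathscr{C}}$ is the ideal quotient of $\mathscr{C}$ by morphisms factoring through objects of $\mathcal{W}$, and $\underline{f}$ denotes the image of $f$. *)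

theory Defs
  imports Main
begin

text \<open>A category with objects of type 'o and morphisms of type 'm, each morphism
carrying its domain and codomain; composition tcmp g f means g after f.
Hom-groups: addition tpls, zero morphisms tzr X Y, negation tng.
Shift functor: tsh on objects, tshm on morphisms. ttri: the distinguished triangles
(u,v,w) of shape X -u-> Y -v-> Z -w-> X[1].\<close>

record ('o, 'm) tcat =
  tobj :: "'o set"
  tmor :: "'m set"
  tdm  :: "'m \<Rightarrow> 'o"
  tcd  :: "'m \<Rightarrow> 'o"
  tcmp :: "'m \<Rightarrow> 'm \<Rightarrow> 'm"
  tid  :: "'o \<Rightarrow> 'm"
  tpls :: "'m \<Rightarrow> 'm \<Rightarrow> 'm"
  tzr  :: "'o \<Rightarrow> 'o \<Rightarrow> 'm"
  tng  :: "'m \<Rightarrow> 'm"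
  tsh  :: "'o \<Rightarrow> 'o"
  tshm :: "'m \<Rightarrow> 'm"
  ttri :: "('m \<times> 'm \<times> 'm) set"

definition hom :: "('o,'m) tcat \<Rightarrow> 'o \<Rightarrow> 'o \<Rightarrow> 'm set" where
  "hom C X Y = {f \<in> tmor C. tdm C f = X \<and> tcd C f = Y}"

definition category_ax :: "('o,'m) tcat \<Rightarrow> bool" where
  "category_ax C \<longleftrightarrow>
     (\<forall>f\<in>tmor C. tdm C f \<in> tobj C \<and> tcd C f \<in> tobj C) \<and>
     (\<forall>X\<in>tobj C. tid C X \<in> hom C X X) \<and>
     (\<forall>f\<in>tmor C. \<forall>g\<in>tmor C. tcd C f = tdm C g \<longrightarrow>
         tcmp C g f \<in> hom C (tdm C f) (tcd C g)) \<and>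
     (\<forall>f\<in>tmor C. \<forall>g\<in>tmor C. \<forall>h\<in>tmor C. tcd C f = tdm C g \<and> tcd C g = tdm C h \<longrightarrow>
         tcmp C h (tcmp C g f) = tcmp C (tcmp C h g) f) \<and>
     (\<forall>f\<in>tmor C. tcmp C f (tid C (tdm C f)) = f \<and> tcmp C (tid C (tcd C f)) f = f)"

definition preadditive_ax :: "('o,'m) tcat \<Rightarrow> bool" where
  "preadditive_ax C \<longleftrightarrow>
     (\<forall>X\<in>tobj C. \<forall>Y\<in>tobj C.
        tzr C X Y \<in> hom C X Y \<and>
        (\<forall>f\<in>hom C X Y. \<forall>g\<in>hom C X Y. tpls C f g \<in> hom C X Y \<and> tpls C f g = tpls C g f) \<and>
        (\<forall>f\<in>hom C X Y. \<forall>g\<in>hom C X Y. \<forall>h\<in>hom C X Y.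
            tpls C (tpls C f g) h = tpls C f (tpls C g h)) \<and>
        (\<forall>f\<in>hom C X Y. tng C f \<in> hom C X Y \<and> tpls C f (tng C f) = tzr C X Y
            \<and> tpls C f (tzr C X Y) = f)) \<and>
     (\<forall>X\<in>tobj C. \<forall>Y\<in>tobj C. \<forall>Z\<in>tobj C.
        (\<forall>f\<in>hom C X Y. \<forall>f'\<in>hom C X Y. \<forall>g\<in>hom C Y Z.
            tcmp C g (tpls C f f') = tpls C (tcmp C g f) (tcmp C g f')) \<and>
        (\<forall>f\<in>hom C X Y. \<forall>g\<in>hom C Y Z. \<forall>g'\<in>hom C Y Z.
            tcmp C (tpls C g g') f = tpls C (tcmp C g f) (tcmp C g' f)))"

definition is_zero_obj :: "('o,'m) tcat \<Rightarrow> 'o \<Rightarrow> bool" where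
  "is_zero_obj C Z \<longleftrightarrow> Z \<in> tobj C \<and> tid C Z = tzr C Z Z"

definition is_biprod :: "('o,'m) tcat \<Rightarrow> 'o \<Rightarrow> 'o \<Rightarrow> 'o \<Rightarrow> 'm \<Rightarrow> 'm \<Rightarrow> 'm \<Rightarrow> 'm \<Rightarrow> bool" where
  "is_biprod C P X Y i1 i2 p1 p2 \<longleftrightarrow>
     P \<in> tobj C \<and> X \<in> tobj C \<and> Y \<in> tobj C \<and>
     i1 \<in> hom C X P \<and> i2 \<in> hom C Y P \<and> p1 \<in> hom C P X \<and> p2 \<in> hom C P Y \<and>
     tcmp C p1 i1 = tid C X \<and> tcmp C p2 i2 = tid C Y \<and>
     tcmp C p1 i2 = tzr C Y X \<and> tcmp C p2 i1 = tzr C X Y \<and>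
     tpls C (tcmp C i1 p1) (tcmp C i2 p2) = tid C P"

definition additive_ax :: "('o,'m) tcat \<Rightarrow> bool" where
  "additive_ax C \<longleftrightarrow> category_ax C \<and> preadditive_ax C \<and> (\<exists>Z. is_zero_obj C Z) \<and>
     (\<forall>X\<in>tobj C. \<forall>Y\<in>tobj C. \<exists>P i1 i2 p1 p2. is_biprod C P X Y i1 i2 p1 p2)"

definition is_iso :: "('o,'m) tcat \<Rightarrow> 'm \<Rightarrow> bool" where
  "is_iso C f \<longleftrightarrow> f \<in> tmor C \<and> (\<exists>g\<in>hom C (tcd C f) (tdm C f).
      tcmp C g f = tid C (tdm C f) \<and> tcmp C f g = tid C (tcd C f))"

definition isomorphic :: "('o,'m) tcat \<Rightarrow> 'o \<Rightarrow> 'o \<Rightarrow> bool" where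
  "isomorphic C X Y \<longleftrightarrow> (\<exists>f\<in>hom C X Y. is_iso C f)"

definition shift_ax :: "('o,'m) tcat \<Rightarrow> bool" where
  "shift_ax C \<longleftrightarrow>
     (\<forall>X\<in>tobj C. tsh C X \<in> tobj C) \<and>
     (\<forall>f\<in>tmor C. tshm C f \<in> hom C (tsh C (tdm C f)) (tsh C (tcd C f))) \<and>
     (\<forall>f\<in>tmor C. \<forall>g\<in>tmor C. tcd C f = tdm C g \<longrightarrow>
         tshm C (tcmp C g f) = tcmp C (tshm C g) (tshm C f)) \<and>
     (\<forall>X\<in>tobj C. tshm C (tid C X) = tid C (tsh C X)) \<and>
     (\<forall>X\<in>tobj C. \<forall>Y\<in>tobj C. \<forall>f\<in>hom C X Y. \<forall>g\<in>hom C X Y.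
         tshm C (tpls C f g) = tpls C (tshm C f) (tshm C g)) \<and>
     (\<forall>X\<in>tobj C. \<forall>Y\<in>tobj C. \<forall>g\<in>hom C (tsh C X) (tsh C Y). \<exists>f\<in>hom C X Y. tshm C f = g) \<and>
     (\<forall>X\<in>tobj C. \<forall>Y\<in>tobj C. inj_on (tshm C) (hom C X Y)) \<and>
     (\<forall>Y\<in>tobj C. \<exists>X\<in>tobj C. isomorphic C (tsh C X) Y)"

definition tri_shape :: "('o,'m) tcat \<Rightarrow> 'm \<times> 'm \<times> 'm \<Rightarrow> bool" where
  "tri_shape C t = (case t of (u, v, w) \<Rightarrow>
     u \<in> tmor C \<and> v \<in> tmor C \<and> w \<in> tmor C \<and> tcd C u = tdm C v \<and> tcd C v = tdm C w \<and>
     tcd C w = tsh C (tdm C u))"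

definition tri_morph :: "('o,'m) tcat \<Rightarrow> 'm \<times> 'm \<times> 'm \<Rightarrow> 'm \<times> 'm \<times> 'm \<Rightarrow> 'm \<Rightarrow> 'm \<Rightarrow> 'm \<Rightarrow> bool" where
  "tri_morph C t t' a b c = (case t of (u, v, w) \<Rightarrow> case t' of (u', v', w') \<Rightarrow>
     a \<in> hom C (tdm C u) (tdm C u') \<and> b \<in> hom C (tcd C u) (tcd C u') \<and>
     c \<in> hom C (tcd C v) (tcd C v') \<and>
     tcmp C b u = tcmp C u' a \<and> tcmp C c v = tcmp C v' b \<and>
     tcmp C (tshm C a) w = tcmp C w' c)"

definition triangulated :: "('o,'m) tcat \<Rightarrow> bool" where
  "triangulated C \<longleftrightarrow> additive_ax C \<and> shift_ax C \<and>
     (\<forall>t\<in>ttri C. tri_shape C t) \<and>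
     \<comment> \<open>TR1\<close>
     (\<forall>t t' a b c. t \<in> ttri C \<and> tri_shape C t' \<and> tri_morph C t t' a b c \<and>
         is_iso C a \<and> is_iso C b \<and> is_iso C c \<longrightarrow> t' \<in> ttri C) \<and>
     (\<forall>X\<in>tobj C. \<forall>Z. is_zero_obj C Z \<longrightarrow>
         (tid C X, tzr C X Z, tzr C Z (tsh C X)) \<in> ttri C) \<and>
     (\<forall>u\<in>tmor C. \<exists>v w. (u, v, w) \<in> ttri C) \<and>
     \<comment> \<open>TR2\<close>
     (\<forall>u v w. tri_shape C (u, v, w) \<longrightarrow>
         ((u, v, w) \<in> ttri C \<longleftrightarrow> (v, w, tng C (tshm C u)) \<in> ttri C)) \<and>
     \<comment> \<open>TR3\<close>
     (\<forall>u v w u' v' w' a b. (u, v, w) \<in> ttri C \<and> (u', v', w') \<in> ttri C \<and>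
         a \<in> hom C (tdm C u) (tdm C u') \<and> b \<in> hom C (tcd C u) (tcd C u') \<and>
         tcmp C b u = tcmp C u' a \<longrightarrow>
         (\<exists>c. tri_morph C (u, v, w) (u', v', w') a b c)) \<and>
     \<comment> \<open>TR4 (octahedral axiom)\<close>
     (\<forall>u v j k l i m n. u \<in> tmor C \<and> v \<in> tmor C \<and> tcd C u = tdm C v \<and>
         (u, j, k) \<in> ttri C \<and> (v, l, i) \<in> ttri C \<and> (tcmp C v u, m, n) \<in> ttri C \<longrightarrow>
         (\<exists>f g. (f, g, tcmp C (tshm C j) i) \<in> ttri C \<and>
             tcmp C f j = tcmp C m v \<and> tcmp C n f = k \<and>
             tcmp C g m = l \<and> tcmp C i g = tcmp C (tshm C u) n))"

text \<open>Full additive subcategory closed under isomorphisms and direct summands,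
given by its set of objects.\<close>
definition subcat :: "('o,'m) tcat \<Rightarrow> 'o set \<Rightarrow> bool" where
  "subcat C D \<longleftrightarrow> D \<subseteq> tobj C \<and> (\<exists>Z\<in>D. is_zero_obj C Z) \<and>
     (\<forall>X\<in>D. \<forall>Y. isomorphic C X Y \<longrightarrow> Y \<in> D) \<and>
     (\<forall>P X Y i1 i2 p1 p2. is_biprod C P X Y i1 i2 p1 p2 \<longrightarrow>
         (P \<in> D \<longleftrightarrow> X \<in> D \<and> Y \<in> D))"

definition ext1_zero :: "('o,'m) tcat \<Rightarrow> 'o set \<Rightarrow> 'o set \<Rightarrow> bool" where
  "ext1_zero C D E \<longleftrightarrow> (\<forall>X\<in>D. \<forall>Y\<in>E. hom C X (tsh C Y) = {tzr C X (tsh C Y)})"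

definition star :: "('o,'m) tcat \<Rightarrow> 'o set \<Rightarrow> 'o set \<Rightarrow> 'o set" where
  "star C M N = {Z \<in> tobj C. \<exists>u v w. (u, v, w) \<in> ttri C \<and>
       tdm C u \<in> M \<and> tcd C u = Z \<and> tcd C v \<in> N}"

definition shift_inv :: "('o,'m) tcat \<Rightarrow> 'o set \<Rightarrow> 'o set" where
  "shift_inv C D = {X \<in> tobj C. tsh C X \<in> D}"

definition cotorsion_pair :: "('o,'m) tcat \<Rightarrow> 'o set \<Rightarrow> 'o set \<Rightarrow> bool" where
  "cotorsion_pair C U V \<longleftrightarrow> subcat C U \<and> subcat C V \<and> ext1_zero C U V \<and>
     tobj C = star C U (tsh C ` V)"

definition twin_cotorsion_pair :: "('o,'m) tcat \<Rightarrow> 'o set \<Rightarrow> 'o set \<Rightarrow> 'o set \<Rightarrow> 'o set \<Rightarrow> bool" where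
  "twin_cotorsion_pair C S T U V \<longleftrightarrow>
     cotorsion_pair C S T \<and> cotorsion_pair C U V \<and> ext1_zero C S V"

definition Cminus :: "('o,'m) tcat \<Rightarrow> 'o set \<Rightarrow> 'o set \<Rightarrow> 'o set \<Rightarrow> 'o set" where
  "Cminus C S T U = star C (shift_inv C S) (T \<inter> U)"

definition Cplus :: "('o,'m) tcat \<Rightarrow> 'o set \<Rightarrow> 'o set \<Rightarrow> 'o set \<Rightarrow> 'o set" where
  "Cplus C T U V = star C (T \<inter> U) (tsh C ` V)"

definition factors_through :: "('o,'m) tcat \<Rightarrow> 'o set \<Rightarrow> 'm \<Rightarrow> bool" where
  "factors_through C D f \<longleftrightarrow> (\<exists>Z\<in>D. \<exists>a\<in>hom C (tdm C f) Z. \<exists>b\<in>hom C Z (tcd C f). f = tcmp C b a)"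

definition stab_rel :: "('o,'m) tcat \<Rightarrow> 'o set \<Rightarrow> 'o \<Rightarrow> 'o \<Rightarrow> ('m \<times> 'm) set" where
  "stab_rel C D X Y = {(f, g). f \<in> hom C X Y \<and> g \<in> hom C X Y \<and>
       factors_through C D (tpls C f (tng C g))}"

definition qhom :: "('o,'m) tcat \<Rightarrow> 'o set \<Rightarrow> 'o \<Rightarrow> 'o \<Rightarrow> 'm set set" where
  "qhom C D X Y = hom C X Y // stab_rel C D X Y"

definition qcls :: "('o,'m) tcat \<Rightarrow> 'o set \<Rightarrow> 'm \<Rightarrow> 'm set" where
  "qcls C D f = stab_rel C D (tdm C f) (tcd C f) `` {f}"

definition qcmp :: "('o,'m) tcat \<Rightarrow> 'o set \<Rightarrow> 'm set \<Rightarrow> 'm set \<Rightarrow> 'm set" where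
  "qcmp C D \<beta> \<alpha> = the_elem {qcls C D (tcmp C b a) | b a. b \<in> \<beta> \<and> a \<in> \<alpha>}"

end

theory Submission imports Defs begin
locale TC = fixes C :: "('o,'m) tcat" assumes tri: "triangulated C"
begin
abbreviation "H \<equiv> hom C"
abbreviation "cp \<equiv> tcmp C"
abbreviation "pl \<equiv> tpls C"
abbreviation "ng \<equiv> tng C"
abbreviation "zr \<equiv> tzr C"
abbreviation "sh \<equiv> tsh C"
abbreviation "shm \<equiv> tshm C"
abbreviation "idm \<equiv> tid C"
abbreviation "Ob \<equiv> tobj C"

lemma cat: "category_ax C" and pre: "preadditive_ax C" and shax: "shift_ax C"
  using tri by (auto simp: triangulated_def additive_ax_def)

lemma hom_iff: "f \<in> H X Y \<longleftrightarrow> f \<in> tmor C \<and> tdm C f = X \<and> tcd C f = Y"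
  by (simp add: hom_def)

lemma hom_obj: "f \<in> H X Y \<Longrightarrow> X \<in> Ob \<and> Y \<in> Ob"
  using cat unfolding category_ax_def hom_def by auto
lemma hom_obj1: "f \<in> H X Y \<Longrightarrow> X \<in> Ob" using hom_obj by blast
lemma hom_obj2: "f \<in> H X Y \<Longrightarrow> Y \<in> Ob" using hom_obj by blast

lemma comp_hom[intro]: "f \<in> H X Y \<Longrightarrow> g \<in> H Y Z \<Longrightarrow> cp g f \<in> H X Z"
  using cat unfolding category_ax_def hom_def by auto

lemma assoc: "f \<in> H X Y \<Longrightarrow> g \<in> H Y Z \<Longrightarrow> h \<in> H Z W \<Longrightarrow> cp h (cp g f) = cp (cp h g) f"
  using cat unfolding category_ax_def hom_def by auto

lemma id_hom[intro]: "X \<in> Ob \<Longrightarrow> idm X \<in> H X X"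
  using cat unfolding category_ax_def by auto

lemma id_r[simp]: "f \<in> H X Y \<Longrightarrow> cp f (idm X) = f"
  using cat unfolding category_ax_def hom_def by auto
lemma id_l[simp]: "f \<in> H X Y \<Longrightarrow> cp (idm Y) f = f"
  using cat unfolding category_ax_def hom_def by auto

lemma zr_hom[intro]: "X \<in> Ob \<Longrightarrow> Y \<in> Ob \<Longrightarrow> zr X Y \<in> H X Y"
  using pre unfolding preadditive_ax_def by auto

lemma pl_hom[intro]: "f \<in> H X Y \<Longrightarrow> g \<in> H X Y \<Longrightarrow> pl f g \<in> H X Y"
  using pre hom_obj unfolding preadditive_ax_def by metis
lemma pl_comm: "f \<in> H X Y \<Longrightarrow> g \<in> H X Y \<Longrightarrow> pl f g = pl g f"
  using pre hom_obj unfolding preadditive_ax_def by metis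
lemma pl_assoc: "f \<in> H X Y \<Longrightarrow> g \<in> H X Y \<Longrightarrow> h \<in> H X Y \<Longrightarrow> pl (pl f g) h = pl f (pl g h)"
  using pre hom_obj unfolding preadditive_ax_def by metis
lemma ng_hom[intro]: "f \<in> H X Y \<Longrightarrow> ng f \<in> H X Y"
  using pre hom_obj unfolding preadditive_ax_def by metis
lemma pl_ng: "f \<in> H X Y \<Longrightarrow> pl f (ng f) = zr X Y"
  using pre hom_obj unfolding preadditive_ax_def by metis
lemma pl_zr: "f \<in> H X Y \<Longrightarrow> pl f (zr X Y) = f"
  using pre hom_obj unfolding preadditive_ax_def by metis
lemma comp_pl_r: "f \<in> H X Y \<Longrightarrow> f' \<in> H X Y \<Longrightarrow> g \<in> H Y Z \<Longrightarrow> cp g (pl f f') = pl (cp g f) (cp g f')"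
  using pre hom_obj unfolding preadditive_ax_def by metis
lemma comp_pl_l: "f \<in> H X Y \<Longrightarrow> g \<in> H Y Z \<Longrightarrow> g' \<in> H Y Z \<Longrightarrow> cp (pl g g') f = pl (cp g f) (cp g' f)"
  using pre hom_obj unfolding preadditive_ax_def by metis

lemma zr_pl: "f \<in> H X Y \<Longrightarrow> pl (zr X Y) f = f"
  by (metis hom_obj pl_comm pl_zr zr_hom)

lemma idem_zero: assumes a: "a \<in> H X Y" and e: "pl a a = a" shows "a = zr X Y"
proof -
  have "zr X Y = pl a (ng a)" using pl_ng a by simp
  also have "\<dots> = pl (pl a a) (ng a)" using e by simp
  also have "\<dots> = pl a (pl a (ng a))" using pl_assoc a by blast
  also have "\<dots> = a" using a pl_ng pl_zr by simp
  finally show ?thesis by simp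
qed

lemma comp_zr_r[simp]: assumes g: "g \<in> H Y Z" and X: "X \<in> Ob" shows "cp g (zr X Y) = zr X Z"
proof -
  have z: "zr X Y \<in> H X Y" using X g hom_obj by blast
  have "pl (cp g (zr X Y)) (cp g (zr X Y)) = cp g (zr X Y)"
    using comp_pl_r[OF z z g] pl_zr[OF z] by simp
  thus ?thesis using idem_zero z g by blast
qed

lemma comp_zr_l[simp]: assumes f: "f \<in> H X Y" and Z: "Z \<in> Ob" shows "cp (zr Y Z) f = zr X Z"
proof -
  have z: "zr Y Z \<in> H Y Z" using Z f hom_obj by blast
  have "pl (cp (zr Y Z) f) (cp (zr Y Z) f) = cp (zr Y Z) f"
    using comp_pl_l[OF f z z] pl_zr[OF z] by simp
  thus ?thesis using idem_zero z f by blast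
qed

lemma neg_unique: assumes a: "a \<in> H X Y" and b: "b \<in> H X Y" and e: "pl a b = zr X Y" shows "b = ng a"
proof -
  have "b = pl (zr X Y) b" using zr_pl b by simp
  also have "\<dots> = pl (pl (ng a) a) b" using pl_ng a pl_comm ng_hom by metis
  also have "\<dots> = pl (ng a) (pl a b)" using pl_assoc a b ng_hom by blast
  also have "\<dots> = ng a" using e pl_zr a ng_hom by simp
  finally show ?thesis .
qed

lemma ng_ng[simp]: "a \<in> H X Y \<Longrightarrow> ng (ng a) = a"
  by (metis neg_unique ng_hom pl_comm pl_ng)

lemma ng_zr[simp]: "X \<in> Ob \<Longrightarrow> Y \<in> Ob \<Longrightarrow> ng (zr X Y) = zr X Y"
  by (metis neg_unique pl_zr zr_hom)

lemma minus_zero_eq: assumes a: "a \<in> H X Y" and b: "b \<in> H X Y" and e: "pl a (ng b) = zr X Y" shows "a = b"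
  by (metis a b e neg_unique ng_hom ng_ng)

lemma comp_ng_l: assumes f: "f \<in> H X Y" and g: "g \<in> H Y Z" shows "cp (ng g) f = ng (cp g f)"
proof -
  have "pl (cp g f) (cp (ng g) f) = zr X Z"
    using comp_pl_l[OF f g ng_hom[OF g]] pl_ng[OF g] comp_zr_l f g hom_obj by metis
  thus ?thesis using neg_unique f g comp_hom ng_hom by blast
qed

lemma comp_ng_r: assumes f: "f \<in> H X Y" and g: "g \<in> H Y Z" shows "cp g (ng f) = ng (cp g f)"
proof -
  have "pl (cp g f) (cp g (ng f)) = zr X Z"
    using comp_pl_r[OF f ng_hom[OF f] g] pl_ng[OF f] comp_zr_r f g hom_obj by metis
  thus ?thesis using neg_unique f g comp_hom ng_hom by blast
qed

lemma zero_obj_src: "is_zero_obj C Z \<Longrightarrow> f \<in> H Z Y \<Longrightarrow> f = zr Z Y"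
  unfolding is_zero_obj_def by (metis comp_zr_r hom_obj id_r)
lemma zero_obj_tgt: "is_zero_obj C Z \<Longrightarrow> f \<in> H Y Z \<Longrightarrow> f = zr Y Z"
  unfolding is_zero_obj_def by (metis comp_zr_l hom_obj id_l)

lemma ex_zero: "\<exists>Z. is_zero_obj C Z"
  using tri by (auto simp: triangulated_def additive_ax_def)

lemma sh_obj[intro]: "X \<in> Ob \<Longrightarrow> sh X \<in> Ob" using shax unfolding shift_ax_def by auto
lemma shm_hom[intro]: "f \<in> H X Y \<Longrightarrow> shm f \<in> H (sh X) (sh Y)"
  using shax unfolding shift_ax_def hom_def by auto
lemma shm_comp: "f \<in> H X Y \<Longrightarrow> g \<in> H Y Z \<Longrightarrow> shm (cp g f) = cp (shm g) (shm f)"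
  using shax unfolding shift_ax_def hom_def by auto
lemma shm_id[simp]: "X \<in> Ob \<Longrightarrow> shm (idm X) = idm (sh X)"
  using shax unfolding shift_ax_def by auto
lemma shm_pl: "f \<in> H X Y \<Longrightarrow> g \<in> H X Y \<Longrightarrow> shm (pl f g) = pl (shm f) (shm g)"
  using shax hom_obj unfolding shift_ax_def by metis
lemma shm_full: "X \<in> Ob \<Longrightarrow> Y \<in> Ob \<Longrightarrow> g \<in> H (sh X) (sh Y) \<Longrightarrow> \<exists>f\<in>H X Y. shm f = g"
  using shax unfolding shift_ax_def by auto
lemma shm_inj: "f \<in> H X Y \<Longrightarrow> g \<in> H X Y \<Longrightarrow> shm f = shm g \<Longrightarrow> f = g"
  using shax hom_obj unfolding shift_ax_def inj_on_def by metis

lemma shm_zr[simp]: assumes X: "X \<in> Ob" and Y: "Y \<in> Ob" shows "shm (zr X Y) = zr (sh X) (sh Y)"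
proof -
  have z: "zr X Y \<in> H X Y" using X Y by blast
  have "pl (shm (zr X Y)) (shm (zr X Y)) = shm (zr X Y)"
    using shm_pl[OF z z] pl_zr[OF z] by simp
  thus ?thesis using idem_zero shm_hom[OF z] by blast
qed

lemma shm_ng: assumes f: "f \<in> H X Y" shows "shm (ng f) = ng (shm f)"
proof -
  have "pl (shm f) (shm (ng f)) = zr (sh X) (sh Y)"
    using shm_pl[OF f ng_hom[OF f]] pl_ng[OF f] f hom_obj shm_zr by metis
  thus ?thesis using neg_unique f shm_hom ng_hom by blast
qed

lemma shm_zero_iff: "f \<in> H X Y \<Longrightarrow> shm f = zr (sh X) (sh Y) \<Longrightarrow> f = zr X Y"
  by (metis hom_obj shm_inj shm_zr zr_hom)

lemma zero_obj_sh: assumes "is_zero_obj C Z" shows "is_zero_obj C (sh Z)"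
  using assms unfolding is_zero_obj_def by (metis sh_obj shm_id shm_zr)


lemma hom_dom: "f \<in> H X Y \<Longrightarrow> tdm C f = X" by (simp add: hom_def)
lemma hom_cod: "f \<in> H X Y \<Longrightarrow> tcd C f = Y" by (simp add: hom_def)
lemma hom_mor: "f \<in> H X Y \<Longrightarrow> f \<in> tmor C" by (simp add: hom_def)
lemma mor_hom: "f \<in> tmor C \<Longrightarrow> f \<in> H (tdm C f) (tcd C f)" by (simp add: hom_def)

lemma tri_ax: "(\<forall>t\<in>ttri C. tri_shape C t)"
  "(\<forall>t t' a b c. t \<in> ttri C \<and> tri_shape C t' \<and> tri_morph C t t' a b c \<and>
         is_iso C a \<and> is_iso C b \<and> is_iso C c \<longrightarrow> t' \<in> ttri C)"
  "(\<forall>X\<in>tobj C. \<forall>Z. is_zero_obj C Z \<longrightarrow> (tid C X, tzr C X Z, tzr C Z (tsh C X)) \<in> ttri C)"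
  "(\<forall>u\<in>tmor C. \<exists>v w. (u, v, w) \<in> ttri C)"
  "(\<forall>u v w. tri_shape C (u, v, w) \<longrightarrow>
         ((u, v, w) \<in> ttri C \<longleftrightarrow> (v, w, tng C (tshm C u)) \<in> ttri C))"
  "(\<forall>u v w u' v' w' a b. (u, v, w) \<in> ttri C \<and> (u', v', w') \<in> ttri C \<and>
         a \<in> hom C (tdm C u) (tdm C u') \<and> b \<in> hom C (tcd C u) (tcd C u') \<and>
         tcmp C b u = tcmp C u' a \<longrightarrow>
         (\<exists>c. tri_morph C (u, v, w) (u', v', w') a b c))"
  "(\<forall>u v j k l i m n. u \<in> tmor C \<and> v \<in> tmor C \<and> tcd C u = tdm C v \<and>
         (u, j, k) \<in> ttri C \<and> (v, l, i) \<in> ttri C \<and> (tcmp C v u, m, n) \<in> ttri C \<longrightarrow>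
         (\<exists>f g. (f, g, tcmp C (tshm C j) i) \<in> ttri C \<and>
             tcmp C f j = tcmp C m v \<and> tcmp C n f = k \<and>
             tcmp C g m = l \<and> tcmp C i g = tcmp C (tshm C u) n))"
  using tri unfolding triangulated_def apply -
  by (elim conjE, assumption)+

lemma tri_shapeI: "u \<in> H X Y \<Longrightarrow> v \<in> H Y Z \<Longrightarrow> w \<in> H Z (sh X) \<Longrightarrow> tri_shape C (u,v,w)"
  by (simp add: tri_shape_def hom_def)

lemma tri_homs: assumes "(u,v,w) \<in> ttri C"
  shows "u \<in> H (tdm C u) (tcd C u)" "v \<in> H (tcd C u) (tcd C v)" "w \<in> H (tcd C v) (sh (tdm C u))"
  using tri_ax(1) assms unfolding tri_shape_def hom_def by auto

lemma tri_hom2: "(u,v,w) \<in> ttri C \<Longrightarrow> u \<in> H X Y \<Longrightarrow> v \<in> H Y (tcd C v)"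
  using tri_homs hom_cod by metis
lemma tri_hom3: "(u,v,w) \<in> ttri C \<Longrightarrow> u \<in> H X Y \<Longrightarrow> v \<in> H Y Z \<Longrightarrow> w \<in> H Z (sh X)"
  using tri_homs hom_cod hom_dom by metis

lemma rot: assumes t: "(u,v,w) \<in> ttri C" shows "(v, w, ng (shm u)) \<in> ttri C"
  using tri_ax(5) tri_ax(1) t by blast

lemma rotb: assumes t: "(v,w,x) \<in> ttri C" and u: "u \<in> H X Y" and v: "v \<in> H Y Z"
  and w: "w \<in> H Z (sh X)" and x: "x = ng (shm u)" shows "(u,v,w) \<in> ttri C"
  using tri_ax(5) tri_shapeI[OF u v w] t x by blast

lemma tr3: assumes t: "(u,v,w) \<in> ttri C" and t': "(u',v',w') \<in> ttri C"
  and u: "u \<in> H X Y" and u': "u' \<in> H X' Y'" and a: "a \<in> H X X'" and b: "b \<in> H Y Y'"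
  and sq: "cp b u = cp u' a"
  shows "\<exists>c. tri_morph C (u, v, w) (u', v', w') a b c"
  using tri_ax(6) t t' a b sq hom_dom[OF u] hom_cod[OF u] hom_dom[OF u'] hom_cod[OF u'] by metis

lemma tr1_zero: "X \<in> Ob \<Longrightarrow> is_zero_obj C Z \<Longrightarrow> (idm X, zr X Z, zr Z (sh X)) \<in> ttri C"
  using tri_ax(3) by blast

lemma zero_obj_ob: "is_zero_obj C Z \<Longrightarrow> Z \<in> Ob" by (simp add: is_zero_obj_def)

lemma T1: assumes t: "(u,v,w) \<in> ttri C" and u: "u \<in> H X Y" and v: "v \<in> H Y Z"
  shows "cp v u = zr X Z"
proof -
  obtain Z1 where z: "is_zero_obj C Z1" using ex_zero by blast
  have X: "X \<in> Ob" using u hom_obj by blast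
  have t0: "(idm X, zr X Z1, zr Z1 (sh X)) \<in> ttri C" using tr1_zero X z by blast
  obtain c where c: "tri_morph C (idm X, zr X Z1, zr Z1 (sh X)) (u,v,w) (idm X) u c"
    using tr3[OF t0 t id_hom[OF X] u id_hom[OF X] u] u by auto
  have zh: "zr X Z1 \<in> H X Z1" using X z zero_obj_ob by blast
  have ch: "c \<in> H Z1 Z" and eq: "cp c (zr X Z1) = cp v u"
    using c v u unfolding tri_morph_def by (auto simp: hom_cod[OF zh] hom_cod[OF v])
  have "c = zr Z1 Z" using zero_obj_src z ch by blast
  thus ?thesis using eq X hom_obj[OF ch] by (metis comp_zr_l zr_hom)
qed

lemma T2: assumes t: "(u,v,w) \<in> ttri C" and u: "u \<in> H X Y" and v: "v \<in> H Y Z"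
  and h: "h \<in> H Y M" and hz: "cp h u = zr X M"
  shows "\<exists>h'\<in>H Z M. h = cp h' v"
proof -
  obtain Z1 where z: "is_zero_obj C Z1" using ex_zero by blast
  have z2: "is_zero_obj C (sh Z1)" using zero_obj_sh z by blast
  have M: "M \<in> Ob" using h hom_obj by blast
  have X: "X \<in> Ob" using u hom_obj by blast
  have Z1: "Z1 \<in> Ob" using z zero_obj_ob by blast
  have tm: "(idm M, zr M (sh Z1), zr (sh Z1) (sh M)) \<in> ttri C" using tr1_zero M z2 by blast
  have t': "(zr Z1 M, idm M, zr M (sh Z1)) \<in> ttri C"
    by (rule rotb[OF tm]) (use M Z1 sh_obj ng_zr in auto)
  have sq: "cp h u = cp (zr Z1 M) (zr X Z1)" using hz comp_zr_l[OF zr_hom[OF X Z1] M] by simp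
  obtain c where c: "tri_morph C (u,v,w) (zr Z1 M, idm M, zr M (sh Z1)) (zr X Z1) h c"
    using tr3[OF t t' u zr_hom[OF Z1 M] zr_hom[OF X Z1] h sq] by blast
  have ch: "c \<in> H Z M" and eq: "cp c v = cp (idm M) h"
    using c v u M Z1 unfolding tri_morph_def by (auto simp: hom_cod[OF id_hom[OF M]] hom_cod[OF v])
  thus ?thesis using h by auto
qed

lemma T3: assumes t: "(u,v,w) \<in> ttri C" and u: "u \<in> H X Y" and v: "v \<in> H Y Z"
  and h: "h \<in> H N Y" and hz: "cp v h = zr N Z"
  shows "\<exists>h'\<in>H N X. h = cp u h'"
proof -
  obtain Z1 where z: "is_zero_obj C Z1" using ex_zero by blast
  have N: "N \<in> Ob" using h hom_obj by blast
  have X: "X \<in> Ob" using u hom_obj by blast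
  have Z: "Z \<in> Ob" using v hom_obj by blast
  have Z1: "Z1 \<in> Ob" using z zero_obj_ob by blast
  have w: "w \<in> H Z (sh X)" using tri_hom3 t u v by blast
  have t0: "(zr N Z1, zr Z1 (sh N), ng (shm (idm N))) \<in> ttri C" using rot tr1_zero N z by blast
  have t1: "(v, w, ng (shm u)) \<in> ttri C" using rot t by blast
  have sq: "cp (zr Z1 Z) (zr N Z1) = cp v h" using hz comp_zr_l[OF zr_hom[OF N Z1] Z] by simp
  obtain c where c: "tri_morph C (zr N Z1, zr Z1 (sh N), ng (shm (idm N))) (v, w, ng (shm u)) h (zr Z1 Z) c"
    using tr3[OF t0 t1 zr_hom[OF N Z1] v h zr_hom[OF Z1 Z] sq] by blast
  have ch: "c \<in> H (sh N) (sh X)" and eq: "cp (shm h) (ng (shm (idm N))) = cp (ng (shm u)) c"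
    using c v u w N Z1 unfolding tri_morph_def
    by (auto simp: hom_cod[OF zr_hom[OF Z1 sh_obj[OF N]]] shm_id[OF N] hom_cod[OF w])
  have shu: "shm u \<in> H (sh X) (sh Y)" using u by blast
  have shh: "shm h \<in> H (sh N) (sh Y)" using h by blast
  have "cp (shm h) (ng (shm (idm N))) = ng (shm h)"
    using N shh comp_ng_r[OF id_hom[OF sh_obj[OF N]] shh] by simp
  moreover have "cp (ng (shm u)) c = ng (cp (shm u) c)" using comp_ng_l[OF ch shu] .
  ultimately have "ng (shm h) = ng (cp (shm u) c)" using eq by simp
  hence e2: "shm h = cp (shm u) c" using shh ch shu by (metis comp_hom ng_ng)
  obtain h' where h': "h' \<in> H N X" "shm h' = c" using shm_full[OF N X ch] by blast
  have "shm h = shm (cp u h')" using e2 h' u shm_comp by metis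
  hence "h = cp u h'" using shm_inj h h' u by blast
  thus ?thesis using h' by blast
qed

lemma iso_id: "X \<in> Ob \<Longrightarrow> is_iso C (idm X)"
  unfolding is_iso_def using id_hom hom_dom hom_cod hom_mor by (metis id_l)

lemma iso_ngid: assumes X: "X \<in> Ob" shows "is_iso C (ng (idm X))"
proof -
  have i: "ng (idm X) \<in> H X X" using X by blast
  have e: "cp (ng (idm X)) (ng (idm X)) = idm X"
    using comp_ng_l[OF i id_hom[OF X]] i ng_ng[OF id_hom[OF X]] by simp
  show ?thesis unfolding is_iso_def using i e hom_dom hom_cod hom_mor by metis
qed

lemma SHT: assumes t: "(u,v,w) \<in> ttri C" and u: "u \<in> H X Y" and v: "v \<in> H Y Z"
  shows "(shm u, shm v, ng (shm w)) \<in> ttri C"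
proof -
  have w: "w \<in> H Z (sh X)" using tri_hom3 t u v by blast
  have X: "X \<in> Ob" and Y: "Y \<in> Ob" and Z: "Z \<in> Ob" using u v hom_obj by auto
  have t3: "(ng (shm u), ng (shm v), ng (shm w)) \<in> ttri C" using rot[OF rot[OF rot[OF t]]] .
  have su: "shm u \<in> H (sh X) (sh Y)" and sv: "shm v \<in> H (sh Y) (sh Z)"
    and sw: "shm w \<in> H (sh Z) (sh (sh X))" using u v w by auto
  have shp: "tri_shape C (shm u, shm v, ng (shm w))" using tri_shapeI su sv ng_hom[OF sw] by blast
  have ib: "ng (idm (sh Y)) \<in> H (sh Y) (sh Y)" using Y by blast
  have m: "tri_morph C (ng (shm u), ng (shm v), ng (shm w)) (shm u, shm v, ng (shm w))
       (idm (sh X)) (ng (idm (sh Y))) (idm (sh Z))"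
  proof -
    have X1: "sh X \<in> Ob" and Y1: "sh Y \<in> Ob" and Z1: "sh Z \<in> Ob" using X Y Z by auto
    have e1: "cp (ng (idm (sh Y))) (ng (shm u)) = cp (shm u) (idm (sh X))"
      using comp_ng_l[OF ng_hom[OF su] id_hom[OF Y1]] ng_ng[OF su] su ng_hom[OF su] by simp
    have e2: "cp (idm (sh Z)) (ng (shm v)) = cp (shm v) (ng (idm (sh Y)))"
      using comp_ng_r[OF id_hom[OF Y1] sv] sv ng_hom[OF sv] by simp
    have e3: "cp (shm (idm (sh X))) (ng (shm w)) = cp (ng (shm w)) (idm (sh Z))"
      using shm_id[OF X1] ng_hom[OF sw] by simp
    show ?thesis unfolding tri_morph_def prod.case
      using hom_dom[OF ng_hom[OF su]] hom_cod[OF ng_hom[OF su]] hom_cod[OF ng_hom[OF sv]]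
        hom_cod[OF sv] hom_cod[OF su] hom_dom[OF su] id_hom[OF X1] id_hom[OF Z1] ib e1 e2 e3
      by simp
  qed
  show ?thesis using tri_ax(2) t3 shp m iso_id iso_ngid X Y Z sh_obj by blast
qed
end

context TC begin

lemma alg1: assumes a: "a \<in> H X Y" and b: "b \<in> H X Y" and c: "c \<in> H X Y"
  shows "pl (pl a (ng b)) (pl b (ng c)) = pl a (ng c)"
proof -
  have "pl (pl a (ng b)) (pl b (ng c)) = pl a (pl (ng b) (pl b (ng c)))"
    using pl_assoc a b c by blast
  also have "pl (ng b) (pl b (ng c)) = pl (pl (ng b) b) (ng c)" using pl_assoc b c by (metis ng_hom)
  also have "pl (ng b) b = zr X Y" using pl_ng b pl_comm by (metis ng_hom)
  also have "pl (zr X Y) (ng c) = ng c" using zr_pl c by blast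
  finally show ?thesis .
qed

lemma ng_diff: assumes a: "a \<in> H X Y" and b: "b \<in> H X Y" shows "ng (pl a (ng b)) = pl b (ng a)"
  using alg1[OF a b a] pl_ng[OF a] neg_unique a b by (metis ng_hom pl_hom)

lemma diff_zr: "a \<in> H X Y \<Longrightarrow> pl a (ng (zr X Y)) = a"
  by (metis hom_obj ng_zr pl_zr)

lemma pl_zr_ng: assumes a: "a \<in> H X Y" and b: "b \<in> H X Y" shows "pl a (pl b (ng a)) = b"
proof -
  have "pl a (pl b (ng a)) = pl a (pl (ng a) b)" using pl_comm a b by (metis ng_hom)
  also have "\<dots> = pl (pl a (ng a)) b" using pl_assoc a b by (metis ng_hom)
  finally show ?thesis using pl_ng a zr_pl b by simp
qed

lemma ext0: "ext1_zero C D E \<Longrightarrow> X \<in> D \<Longrightarrow> Y \<in> E \<Longrightarrow> g \<in> H X (sh Y) \<Longrightarrow> g = zr X (sh Y)"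
  unfolding ext1_zero_def by blast

lemma ext0m: assumes e: "ext1_zero C D E" and X: "sh X \<in> D" and Y: "Y \<in> E"
  and g: "g \<in> H X Y" shows "g = zr X Y"
proof -
  have "shm g = zr (sh X) (sh Y)" using ext0[OF e X Y] shm_hom[OF g] by blast
  thus ?thesis using shm_zero_iff g by blast
qed

lemma subcat_ob: "subcat C D \<Longrightarrow> X \<in> D \<Longrightarrow> X \<in> Ob" unfolding subcat_def by blast

lemma perp: assumes cp: "cotorsion_pair C P Q" and E: "E \<in> Ob"
  and z: "\<And>Q0 y. Q0 \<in> Q \<Longrightarrow> y \<in> H E (sh Q0) \<Longrightarrow> y = zr E (sh Q0)"
  shows "E \<in> P"
proof -
  have sP: "subcat C P" and sQ: "subcat C Q" and st: "Ob = star C P (sh ` Q)"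
    using cp unfolding cotorsion_pair_def by auto
  obtain u0 v0 w0 where t: "(u0,v0,w0) \<in> ttri C" and P0: "tdm C u0 \<in> P" and cu: "tcd C u0 = E"
    and cv: "tcd C v0 \<in> sh ` Q"
    using E st unfolding star_def by blast
  define P0 where "P0 = tdm C u0"
  obtain Q0 where Q0: "Q0 \<in> Q" and cv': "tcd C v0 = sh Q0" using cv by blast
  have u0: "u0 \<in> H P0 E" using tri_homs(1)[OF t] cu P0_def by simp
  have v0: "v0 \<in> H E (sh Q0)" using tri_homs(2)[OF t] cu cv' by simp
  have w0: "w0 \<in> H (sh Q0) (sh P0)" using tri_homs(3)[OF t] cv' P0_def by simp
  have P0o: "P0 \<in> Ob" and Q0o: "Q0 \<in> Ob" using P0 Q0 sP sQ subcat_ob P0_def by auto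
  have v0z: "v0 = zr E (sh Q0)" using z Q0 v0 by blast
  obtain s where s: "s \<in> H E P0" and us: "idm E = cp u0 s"
    using T3[OF t u0 v0 id_hom[OF E]] v0 v0z by auto
  obtain al where al: "al \<in> H Q0 P0" and sal: "shm al = ng w0"
    using shm_full[OF Q0o P0o ng_hom[OF w0]] by blast
  have ta: "(al, u0, v0) \<in> ttri C"
    by (rule rotb[OF t al u0 v0]) (use sal ng_ng[OF w0] in simp)
  have ua: "cp u0 al = zr Q0 E" using T1[OF ta al u0] .
  define e where "e = pl (idm P0) (ng (cp s u0))"
  have su: "cp s u0 \<in> H P0 P0" using s u0 by blast
  have eh: "e \<in> H P0 P0" using e_def su P0o by blast
  have usu: "cp u0 (cp s u0) = u0" using assoc[OF u0 s u0] us[symmetric] u0 by simp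
  have ue: "cp u0 e = zr P0 E"
    unfolding e_def using comp_pl_r[OF id_hom[OF P0o] ng_hom[OF su] u0] comp_ng_r[OF su u0] usu u0 pl_ng
    by simp
  obtain r where r: "r \<in> H P0 Q0" and er: "e = cp al r" using T3[OF ta al u0 eh ue] by blast
  have mono: "x = zr N Q0" if x: "x \<in> H N Q0" and ax: "cp al x = zr N P0" for x N
  proof -
    have N: "N \<in> Ob" using x hom_obj by blast
    have "shm (cp al x) = zr (sh N) (sh P0)" using ax N P0o by simp
    hence "cp (ng w0) (shm x) = zr (sh N) (sh P0)" using shm_comp[OF x al] sal by simp
    hence "ng (cp w0 (shm x)) = zr (sh N) (sh P0)" using comp_ng_l[OF shm_hom[OF x] w0] by simp
    hence wx: "cp w0 (shm x) = zr (sh N) (sh P0)"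
      using ng_ng[OF comp_hom[OF shm_hom[OF x] w0]] N P0o by (metis ng_zr sh_obj)
    have tr: "(v0, w0, ng (shm u0)) \<in> ttri C" using rot[OF t] .
    obtain h' where h': "h' \<in> H (sh N) E" and "shm x = cp v0 h'"
      using T3[OF tr v0 w0 shm_hom[OF x] wx] by blast
    hence "shm x = zr (sh N) (sh Q0)" using v0z comp_zr_l[OF h' sh_obj[OF Q0o]] by simp
    thus ?thesis using shm_zero_iff x by blast
  qed
  have ra: "cp r al = idm Q0"
  proof -
    have ra_h: "cp r al \<in> H Q0 Q0" using r al by blast
    have "cp al (cp r al) = cp e al" using assoc[OF al r al] er by simp
    also have "\<dots> = pl al (ng (cp s (cp u0 al)))"
      unfolding e_def using comp_pl_l[OF al id_hom[OF P0o] ng_hom[OF su]] comp_ng_l[OF al su]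
        assoc[OF al u0 s] al by simp
    also have "\<dots> = al" using ua comp_zr_r[OF s] Q0o diff_zr[OF al] P0o by simp
    finally have e1: "cp al (cp r al) = al" .
    have "cp al (pl (cp r al) (ng (idm Q0))) = zr Q0 P0"
      using comp_pl_r[OF ra_h ng_hom[OF id_hom[OF Q0o]] al] comp_ng_r[OF id_hom[OF Q0o] al] e1 al pl_ng
      by simp
    hence "pl (cp r al) (ng (idm Q0)) = zr Q0 Q0" using mono ra_h Q0o by blast
    thus ?thesis using minus_zero_eq ra_h id_hom[OF Q0o] by blast
  qed
  have rs: "cp r s = zr E Q0"
  proof -
    have "cp al (cp r s) = cp e s" using assoc[OF s r al] er by simp
    also have "\<dots> = pl s (ng (cp s (cp u0 s)))"
      unfolding e_def using comp_pl_l[OF s id_hom[OF P0o] ng_hom[OF su]] comp_ng_l[OF s su]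
        assoc[OF s u0 s] s by simp
    also have "\<dots> = zr E P0" using us[symmetric] s pl_ng by simp
    finally show ?thesis using mono r s by blast
  qed
  have sum: "pl (cp s u0) (cp al r) = idm P0"
    using er e_def pl_zr_ng[OF su id_hom[OF P0o]] by simp
  have bp: "is_biprod C P0 E Q0 s al u0 r"
    unfolding is_biprod_def using P0o E Q0o s al u0 r us ra ua rs sum by simp
  have "P0 \<in> P" using P0 P0_def by simp
  thus ?thesis using sP bp unfolding subcat_def by blast
qed

end

context TC begin

lemma zero_iso: assumes z: "is_zero_obj C Z" and z': "is_zero_obj C Z'" shows "isomorphic C Z Z'"
proof -
  have Zo: "Z \<in> Ob" and Z'o: "Z' \<in> Ob" using z z' zero_obj_ob by auto
  have f: "zr Z Z' \<in> H Z Z'" and g: "zr Z' Z \<in> H Z' Z" using Zo Z'o by auto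
  have "cp (zr Z' Z) (zr Z Z') = idm Z" using comp_zr_l[OF f Zo] z unfolding is_zero_obj_def by simp
  moreover have "cp (zr Z Z') (zr Z' Z) = idm Z'" using comp_zr_l[OF g Z'o] z' unfolding is_zero_obj_def by simp
  ultimately show ?thesis unfolding isomorphic_def is_iso_def
    using f g hom_dom[OF f] hom_cod[OF f] hom_mor[OF f] by metis
qed

lemma subcat_inter: assumes T: "subcat C T" and U: "subcat C U" shows "subcat C (T \<inter> U)"
proof -
  obtain Zt where Zt: "Zt \<in> T" "is_zero_obj C Zt" using T unfolding subcat_def by blast
  obtain Zu where Zu: "Zu \<in> U" "is_zero_obj C Zu" using U unfolding subcat_def by blast
  have "Zu \<in> T" using T Zt zero_iso[OF Zt(2) Zu(2)] unfolding subcat_def by blast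
  hence "\<exists>Z\<in>T \<inter> U. is_zero_obj C Z" using Zu by blast
  thus ?thesis using T U unfolding subcat_def by blast
qed

lemma FTI: "Z \<in> D \<Longrightarrow> a \<in> H X Z \<Longrightarrow> b \<in> H Z Y \<Longrightarrow> factors_through C D (cp b a)"
  unfolding factors_through_def using comp_hom hom_dom hom_cod by metis

lemma FTE: "h \<in> H X Y \<Longrightarrow> factors_through C D h \<Longrightarrow> \<exists>Z\<in>D. \<exists>a\<in>H X Z. \<exists>b\<in>H Z Y. h = cp b a"
  unfolding factors_through_def using hom_dom hom_cod by metis

lemma ft_zero: assumes D: "subcat C D" and X: "X \<in> Ob" and Y: "Y \<in> Ob"
  shows "factors_through C D (zr X Y)"
proof -
  obtain Z where Z: "Z \<in> D" "is_zero_obj C Z" using D unfolding subcat_def by blast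
  have Zo: "Z \<in> Ob" using Z zero_obj_ob by blast
  have "zr X Y = cp (zr Z Y) (zr X Z)" using comp_zr_l[OF zr_hom[OF X Zo] Y] by simp
  thus ?thesis using FTI[OF Z(1) zr_hom[OF X Zo] zr_hom[OF Zo Y]] by simp
qed

lemma ft_comp_l: assumes h: "h \<in> H X Y" and f: "factors_through C D h" and g: "g \<in> H Y M"
  shows "factors_through C D (cp g h)"
proof -
  obtain Z a b where "Z \<in> D" "a \<in> H X Z" "b \<in> H Z Y" "h = cp b a" using FTE[OF h f] by blast
  thus ?thesis using FTI[of Z D a X "cp g b" M] assoc g by auto
qed

lemma ft_comp_r: assumes h: "h \<in> H X Y" and f: "factors_through C D h" and k: "k \<in> H N X"
  shows "factors_through C D (cp h k)"
proof -
  obtain Z a b where "Z \<in> D" "a \<in> H X Z" "b \<in> H Z Y" "h = cp b a" using FTE[OF h f] by blast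
  thus ?thesis using FTI[of Z D "cp a k" N b Y] assoc k by auto
qed

lemma ft_ng: assumes h: "h \<in> H X Y" and f: "factors_through C D h"
  shows "factors_through C D (ng h)"
proof -
  obtain Z a b where "Z \<in> D" "a \<in> H X Z" "b \<in> H Z Y" "h = cp b a" using FTE[OF h f] by blast
  thus ?thesis using FTI[of Z D a X "ng b" Y] comp_ng_l by auto
qed

lemma biprod_ex: "X \<in> Ob \<Longrightarrow> Y \<in> Ob \<Longrightarrow> \<exists>P i1 i2 p1 p2. is_biprod C P X Y i1 i2 p1 p2"
proof -
  have "additive_ax C" using tri unfolding triangulated_def by simp
  thus "X \<in> Ob \<Longrightarrow> Y \<in> Ob \<Longrightarrow> ?thesis" unfolding additive_ax_def by blast
qed

lemma ft_pl: assumes D: "subcat C D" and h1: "h1 \<in> H X Y" and f1: "factors_through C D h1"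
  and h2: "h2 \<in> H X Y" and f2: "factors_through C D h2"
  shows "factors_through C D (pl h1 h2)"
proof -
  obtain Z1 a1 b1 where Z1: "Z1 \<in> D" and a1: "a1 \<in> H X Z1" and b1: "b1 \<in> H Z1 Y" and e1: "h1 = cp b1 a1"
    using FTE[OF h1 f1] by blast
  obtain Z2 a2 b2 where Z2: "Z2 \<in> D" and a2: "a2 \<in> H X Z2" and b2: "b2 \<in> H Z2 Y" and e2: "h2 = cp b2 a2"
    using FTE[OF h2 f2] by blast
  have Z1o: "Z1 \<in> Ob" and Z2o: "Z2 \<in> Ob" using Z1 Z2 D subcat_ob by auto
  obtain P i1 i2 p1 p2 where bp: "is_biprod C P Z1 Z2 i1 i2 p1 p2" using biprod_ex Z1o Z2o by blast
  have PD: "P \<in> D" using D bp Z1 Z2 unfolding subcat_def by blast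
  have i1: "i1 \<in> H Z1 P" and i2: "i2 \<in> H Z2 P" and p1: "p1 \<in> H P Z1" and p2: "p2 \<in> H P Z2"
    and e11: "cp p1 i1 = idm Z1" and e22: "cp p2 i2 = idm Z2" and e12: "cp p1 i2 = zr Z2 Z1"
    and e21: "cp p2 i1 = zr Z1 Z2" using bp unfolding is_biprod_def by auto
  define a where "a = pl (cp i1 a1) (cp i2 a2)"
  define b where "b = pl (cp b1 p1) (cp b2 p2)"
  have ia1: "cp i1 a1 \<in> H X P" and ia2: "cp i2 a2 \<in> H X P" using i1 i2 a1 a2 by auto
  have bp1: "cp b1 p1 \<in> H P Y" and bp2: "cp b2 p2 \<in> H P Y" using b1 b2 p1 p2 by auto
  have a: "a \<in> H X P" and b: "b \<in> H P Y" using a_def b_def ia1 ia2 bp1 bp2 by auto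
  have bi1: "cp b i1 = b1"
  proof -
    have "cp b i1 = pl (cp (cp b1 p1) i1) (cp (cp b2 p2) i1)" unfolding b_def using comp_pl_l[OF i1 bp1 bp2] .
    also have "\<dots> = pl (cp b1 (cp p1 i1)) (cp b2 (cp p2 i1))" using assoc i1 p1 p2 b1 b2 by metis
    also have "\<dots> = b1" using e11 e21 b1 b2 Z1o pl_zr by simp
    finally show ?thesis .
  qed
  have bi2: "cp b i2 = b2"
  proof -
    have "cp b i2 = pl (cp (cp b1 p1) i2) (cp (cp b2 p2) i2)" unfolding b_def using comp_pl_l[OF i2 bp1 bp2] .
    also have "\<dots> = pl (cp b1 (cp p1 i2)) (cp b2 (cp p2 i2))" using assoc i2 p1 p2 b1 b2 by metis
    also have "\<dots> = b2" using e12 e22 b1 b2 Z2o zr_pl by simp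
    finally show ?thesis .
  qed
  have "cp b a = pl (cp b (cp i1 a1)) (cp b (cp i2 a2))" unfolding a_def using comp_pl_r[OF ia1 ia2 b] .
  also have "\<dots> = pl h1 h2" using assoc[OF a1 i1 b] assoc[OF a2 i2 b] bi1 bi2 e1 e2 by simp
  finally show ?thesis using FTI[OF PD a b] by simp
qed

lemma qcls_mem: "f \<in> H X Y \<Longrightarrow> g \<in> qcls C D f \<longleftrightarrow> g \<in> H X Y \<and> factors_through C D (pl f (ng g))"
  unfolding qcls_def stab_rel_def using hom_dom hom_cod by auto

lemma qcls_refl: assumes D: "subcat C D" and f: "f \<in> H X Y" shows "f \<in> qcls C D f"
  using qcls_mem[OF f] f pl_ng[OF f] ft_zero[OF D] hom_obj[OF f] by simp

lemma qcls_eq: assumes D: "subcat C D" and f: "f \<in> H X Y" and g: "g \<in> H X Y"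
  shows "qcls C D f = qcls C D g \<longleftrightarrow> factors_through C D (pl f (ng g))"
proof
  assume "qcls C D f = qcls C D g"
  hence "g \<in> qcls C D f" using qcls_refl[OF D g] by simp
  thus "factors_through C D (pl f (ng g))" using qcls_mem[OF f] by simp
next
  assume fg: "factors_through C D (pl f (ng g))"
  have fgh: "pl f (ng g) \<in> H X Y" using f g by blast
  have gf: "factors_through C D (pl g (ng f))" using ft_ng[OF fgh fg] ng_diff[OF f g] by simp
  show "qcls C D f = qcls C D g"
  proof (rule set_eqI)
    fix x
    show "x \<in> qcls C D f \<longleftrightarrow> x \<in> qcls C D g"
    proof (cases "x \<in> H X Y")
      case True
      have "factors_through C D (pl f (ng x)) \<longleftrightarrow> factors_through C D (pl g (ng x))"
      proof
        assume "factors_through C D (pl f (ng x))"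
        hence "factors_through C D (pl (pl g (ng f)) (pl f (ng x)))"
          using ft_pl[OF D _ gf] f g True by blast
        thus "factors_through C D (pl g (ng x))" using alg1[OF g f True] by simp
      next
        assume "factors_through C D (pl g (ng x))"
        hence "factors_through C D (pl (pl f (ng g)) (pl g (ng x)))"
          using ft_pl[OF D _ fg] f g True by blast
        thus "factors_through C D (pl f (ng x))" using alg1[OF f g True] by simp
      qed
      thus ?thesis using qcls_mem f g True by simp
    next
      case False thus ?thesis using qcls_mem f g by simp
    qed
  qed
qed

lemma qcls_zero: assumes D: "subcat C D" and f: "f \<in> H X Y"
  shows "qcls C D f = qcls C D (zr X Y) \<longleftrightarrow> factors_through C D f"
  using qcls_eq[OF D f zr_hom] hom_obj[OF f] diff_zr[OF f] by simp

lemma qcmp_cls: assumes D: "subcat C D" and a: "a \<in> H X Y" and b: "b \<in> H Y Z"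
  shows "qcmp C D (qcls C D b) (qcls C D a) = qcls C D (cp b a)"
proof -
  have ba: "cp b a \<in> H X Z" using a b by blast
  have "{qcls C D (cp b' a') | b' a'. b' \<in> qcls C D b \<and> a' \<in> qcls C D a} = {qcls C D (cp b a)}"
  proof (rule set_eqI, rule iffI)
    fix x assume "x \<in> {qcls C D (cp b' a') | b' a'. b' \<in> qcls C D b \<and> a' \<in> qcls C D a}"
    then obtain a' b' where x: "x = qcls C D (cp b' a')" and b': "b' \<in> qcls C D b" and a': "a' \<in> qcls C D a"
      by blast
    have b'h: "b' \<in> H Y Z" and fb: "factors_through C D (pl b (ng b'))" using b' qcls_mem[OF b] by auto
    have a'h: "a' \<in> H X Y" and fa: "factors_through C D (pl a (ng a'))" using a' qcls_mem[OF a] by auto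
    have bb: "pl b (ng b') \<in> H Y Z" and aa: "pl a (ng a') \<in> H X Y" using b b'h a a'h by auto
    have f1: "factors_through C D (cp (pl b (ng b')) a)" using ft_comp_r[OF bb fb a] .
    have f2: "factors_through C D (cp b' (pl a (ng a')))" using ft_comp_l[OF aa fa b'h] .
    have e1: "cp (pl b (ng b')) a = pl (cp b a) (ng (cp b' a))"
      using comp_pl_l[OF a b ng_hom[OF b'h]] comp_ng_l[OF a b'h] by simp
    have e2: "cp b' (pl a (ng a')) = pl (cp b' a) (ng (cp b' a'))"
      using comp_pl_r[OF a ng_hom[OF a'h] b'h] comp_ng_r[OF a'h b'h] by simp
    have "factors_through C D (pl (cp (pl b (ng b')) a) (cp b' (pl a (ng a'))))"
      using ft_pl[OF D _ f1 _ f2] bb aa a b'h by blast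
    hence "factors_through C D (pl (cp b a) (ng (cp b' a')))"
      using e1 e2 alg1[OF ba comp_hom[OF a b'h] comp_hom[OF a'h b'h]] by simp
    hence "qcls C D (cp b a) = qcls C D (cp b' a')" using qcls_eq[OF D ba comp_hom[OF a'h b'h]] by simp
    thus "x \<in> {qcls C D (cp b a)}" using x by simp
  next
    fix x assume "x \<in> {qcls C D (cp b a)}"
    thus "x \<in> {qcls C D (cp b' a') | b' a'. b' \<in> qcls C D b \<and> a' \<in> qcls C D a}"
      using qcls_refl[OF D a] qcls_refl[OF D b] by blast
  qed
  thus ?thesis unfolding qcmp_def by simp
qed

lemma qhom_eq: "qhom C D X Y = qcls C D ` H X Y"
  unfolding qhom_def quotient_def qcls_def using hom_dom hom_cod by auto

end

context TC begin

lemma ess_surj: "Y \<in> Ob \<Longrightarrow> \<exists>X\<in>Ob. isomorphic C (sh X) Y"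
  using shax unfolding shift_ax_def by blast

lemma SC: assumes cpr: "cotorsion_pair C P Q" and E: "E \<in> Ob"
  shows "\<exists>u v w X' T1. (u,v,w) \<in> ttri C \<and> u \<in> H X' E \<and> X' \<in> Ob \<and> sh X' \<in> P \<and> v \<in> H E T1 \<and> T1 \<in> Q"
proof -
  have sP: "subcat C P" and sQ: "subcat C Q" and st: "Ob = star C P (sh ` Q)" and ePQ: "ext1_zero C P Q"
    using cpr unfolding cotorsion_pair_def by auto
  have sE: "sh E \<in> Ob" using E by blast
  obtain u0 v0 w0 where t: "(u0,v0,w0) \<in> ttri C" and P0: "tdm C u0 \<in> P" and cu: "tcd C u0 = sh E"
    and cv: "tcd C v0 \<in> sh ` Q"
    using sE st unfolding star_def by blast
  define S1 where "S1 = tdm C u0"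
  obtain T1 where T1: "T1 \<in> Q" and cv': "tcd C v0 = sh T1" using cv by blast
  have u0: "u0 \<in> H S1 (sh E)" using tri_homs(1)[OF t] cu S1_def by simp
  have v0: "v0 \<in> H (sh E) (sh T1)" using tri_homs(2)[OF t] cu cv' by simp
  have w0: "w0 \<in> H (sh T1) (sh S1)" using tri_homs(3)[OF t] cv' S1_def by simp
  have S1o: "S1 \<in> Ob" and T1o: "T1 \<in> Ob" using P0 T1 sP sQ subcat_ob S1_def by auto
  obtain v where v: "v \<in> H E T1" and sv: "shm v = v0" using shm_full[OF E T1o v0] by blast
  obtain w x where tv: "(v,w,x) \<in> ttri C" using tri_ax(4) hom_mor[OF v] by blast
  define N where "N = tcd C w"
  have w: "w \<in> H T1 N" using tri_homs(2)[OF tv] hom_cod[OF v] N_def by simp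
  have x: "x \<in> H N (sh E)" using tri_homs(3)[OF tv] hom_dom[OF v] N_def by simp
  have No: "N \<in> Ob" using w hom_obj by blast
  obtain X' where X': "X' \<in> Ob" and iso: "isomorphic C (sh X') N" using ess_surj[OF No] by blast
  obtain ph where ph: "ph \<in> H (sh X') N" and phi: "is_iso C ph" using iso unfolding isomorphic_def by blast
  obtain ps where ps: "ps \<in> H N (sh X')" and e1: "cp ps ph = idm (sh X')" and e2: "cp ph ps = idm N"
    using phi ph unfolding is_iso_def by (auto simp: hom_dom[OF ph] hom_cod[OF ph])
  have psi: "is_iso C ps" unfolding is_iso_def using ps ph e1 e2 hom_dom[OF ps] hom_cod[OF ps] hom_mor[OF ps] by metis
  have isoN: "isomorphic C N (sh X')" unfolding isomorphic_def using ps psi by blast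
  have pw: "cp ps w \<in> H T1 (sh X')" using ps w by blast
  have xp: "cp x ph \<in> H (sh X') (sh E)" using ph x by blast
  have t': "(v, cp ps w, cp x ph) \<in> ttri C"
  proof -
    have m: "tri_morph C (v,w,x) (v, cp ps w, cp x ph) (idm E) (idm T1) ps"
      unfolding tri_morph_def prod.case
      using hom_dom[OF v] hom_cod[OF v] hom_cod[OF w] hom_cod[OF pw] id_hom[OF E] id_hom[OF T1o] ps v w
        pw shm_id[OF E] x assoc[OF ps ph x] e2 by simp
    have sh: "tri_shape C (v, cp ps w, cp x ph)" using tri_shapeI[OF v pw xp] .
    show ?thesis using tri_ax(2) tv sh m iso_id[OF E] iso_id[OF T1o] psi by blast
  qed
  obtain u where u: "u \<in> H X' E" and su: "shm u = ng (cp x ph)" using shm_full[OF X' E ng_hom[OF xp]] by blast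
  have tu: "(u, v, cp ps w) \<in> ttri C"
    by (rule rotb[OF t' u v pw]) (use su ng_ng[OF xp] in simp)
  have NP: "N \<in> P"
  proof (rule perp[OF cpr No])
    fix T' y assume T': "T' \<in> Q" and y: "y \<in> H N (sh T')"
    have T'o: "T' \<in> Ob" using T' sQ subcat_ob by blast
    have vanish: "g = zr (sh S1) (sh (sh T'))" if g: "g \<in> H (sh S1) (sh (sh T'))" for g
    proof -
      obtain z where z: "z \<in> H S1 (sh T')" and "shm z = g" using shm_full[OF S1o sh_obj[OF T'o] g] by blast
      moreover have "z = zr S1 (sh T')" using ext0[OF ePQ _ T' z] P0 S1_def by simp
      ultimately show ?thesis using shm_zr[OF S1o sh_obj[OF T'o]] by simp
    qed
    have tS: "(v0, shm w, ng (shm x)) \<in> ttri C" using SHT[OF tv v w] sv by simp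
    have tR: "(v0, w0, ng (shm u0)) \<in> ttri C" using rot[OF t] .
    have sw: "shm w \<in> H (sh T1) (sh N)" and sx: "shm x \<in> H (sh N) (sh (sh E))" using w x by auto
    have su0: "shm u0 \<in> H (sh S1) (sh (sh E))" using u0 by blast
    have iE: "idm (sh E) \<in> H (sh E) (sh E)" and iT: "idm (sh T1) \<in> H (sh T1) (sh T1)" using E T1o by auto
    have sq: "cp (idm (sh T1)) v0 = cp v0 (idm (sh E))" using v0 by simp
    obtain c where c: "tri_morph C (v0, w0, ng (shm u0)) (v0, shm w, ng (shm x)) (idm (sh E)) (idm (sh T1)) c"
      using tr3[OF tR tS v0 v0 iE iT sq] by blast
    have ch: "c \<in> H (sh S1) (sh N)" and cw: "cp c w0 = shm w"
      using c unfolding tri_morph_def prod.case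
      using hom_cod[OF w0] hom_cod[OF sw] hom_cod[OF v0] iT sw by auto
    obtain c' where c': "tri_morph C (v0, shm w, ng (shm x)) (v0, w0, ng (shm u0)) (idm (sh E)) (idm (sh T1)) c'"
      using tr3[OF tS tR v0 v0 iE iT sq] by blast
    have c'h: "c' \<in> H (sh N) (sh S1)" and cx: "cp (shm (idm (sh E))) (ng (shm x)) = cp (ng (shm u0)) c'"
      using c' unfolding tri_morph_def prod.case
      using hom_cod[OF w0] hom_cod[OF sw] hom_cod[OF v0] by auto
    have "ng (shm x) = ng (cp (shm u0) c')"
      using cx shm_id[OF sE] ng_hom[OF sx] comp_ng_l[OF c'h su0] by simp
    hence sxe: "shm x = cp (shm u0) c'" using ng_ng sx c'h su0 by (metis comp_hom)
    have sy: "shm y \<in> H (sh N) (sh (sh T'))" using y by blast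
    have yc: "cp (shm y) c = zr (sh S1) (sh (sh T'))" using vanish comp_hom[OF ch sy] by blast
    have "cp (shm y) (shm w) = cp (cp (shm y) c) w0" using cw assoc[OF w0 ch sy] by simp
    hence yw: "cp (shm y) (shm w) = zr (sh T1) (sh (sh T'))" using yc comp_zr_l[OF w0 sh_obj[OF sh_obj[OF T'o]]] by simp
    have tS2: "(shm w, ng (shm x), ng (shm v0)) \<in> ttri C" using rot[OF tS] by simp
    obtain y' where y': "y' \<in> H (sh (sh E)) (sh (sh T'))" and ye: "shm y = cp y' (ng (shm x))"
      using T2[OF tS2 sw ng_hom[OF sx] sy yw] by blast
    have yu: "cp y' (shm u0) = zr (sh S1) (sh (sh T'))" using vanish comp_hom[OF su0 y'] by blast
    have "shm y = ng (cp y' (cp (shm u0) c'))" using ye sxe comp_ng_r[OF sx y'] by simp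
    also have "\<dots> = ng (cp (zr (sh S1) (sh (sh T'))) c')" using assoc[OF c'h su0 y'] yu by simp
    also have "\<dots> = zr (sh N) (sh (sh T'))" using comp_zr_l[OF c'h sh_obj[OF sh_obj[OF T'o]]] ng_zr[OF sh_obj[OF No] sh_obj[OF sh_obj[OF T'o]]] by simp
    finally show "y = zr N (sh T')" using shm_zero_iff y by simp
  qed
  have "sh X' \<in> P" using NP isoN sP unfolding subcat_def by blast
  thus ?thesis using tu u X' v T1 by blast
qed

end


theorem proposition4p2:
  fixes C :: "('o, 'm) tcat" and S T U V :: "'o set"
    and A B X WA MF :: 'o and f sA wA tA mf t :: 'm
  assumes tri: "triangulated C"
    and twin: "twin_cotorsion_pair C S T U V"
    and A: "A \<in> Cminus C S T U" and B: "B \<in> tobj C" and f: "f \<in> hom C A B"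
    and SA: "tsh C X \<in> S" and WA: "WA \<in> T \<inter> U"
    and t1: "(sA, wA, tA) \<in> ttri C" and sA: "sA \<in> hom C X A" and wA: "wA \<in> hom C A WA"
    and t2: "(tcmp C f sA, mf, t) \<in> ttri C" and mf: "mf \<in> hom C B MF"
  shows "qcmp C (T \<inter> U) (qcls C (T \<inter> U) mf) (qcls C (T \<inter> U) f) = qcls C (T \<inter> U) (tzr C A MF)
       \<and> (\<forall>Y \<in> Cplus C T U V.
           bij_betw (\<lambda>\<gamma>. qcmp C (T \<inter> U) \<gamma> (qcls C (T \<inter> U) mf))
             (qhom C (T \<inter> U) MF Y)
             {\<beta> \<in> qhom C (T \<inter> U) B Y. qcmp C (T \<inter> U) \<beta> (qcls C (T \<inter> U) f) = qcls C (T \<inter> U) (tzr C A Y)})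
       \<and> (B \<in> Cminus C S T U \<longrightarrow> MF \<in> Cminus C S T U)"
proof -
  interpret TC C by unfold_locales (rule tri)
  define W where "W = T \<inter> U"
  have cST: "cotorsion_pair C S T" and cUV: "cotorsion_pair C U V" and eSV: "ext1_zero C S V"
    using twin unfolding twin_cotorsion_pair_def by auto
  have sS: "subcat C S" and sT: "subcat C T" and eST: "ext1_zero C S T"
    using cST unfolding cotorsion_pair_def by auto
  have sU: "subcat C U" and sV: "subcat C V" and eUV: "ext1_zero C U V"
    using cUV unfolding cotorsion_pair_def by auto
  have sW: "subcat C W" using subcat_inter[OF sT sU] W_def by simp
  have Xo: "X \<in> Ob" using sA hom_obj by blast
  have Ao: "A \<in> Ob" using sA hom_obj by blast
  have MFo: "MF \<in> Ob" using mf hom_obj by blast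
  have fs: "cp f sA \<in> H X B" using sA f by blast
  have th: "t \<in> H MF (sh X)" using tri_hom3[OF t2 fs mf] .
  have XW: "g = zr X W0" if "W0 \<in> T" "g \<in> H X W0" for g W0
    using ext0m[OF eST SA that] .
  have rt2: "(mf, t, ng (shm (cp f sA))) \<in> ttri C" using rot[OF t2] .
  have mff: "cp mf f \<in> H A MF" using f mf by blast
  have ftmf: "factors_through C W (cp mf f)"
  proof -
    have "cp (cp mf f) sA = zr X MF" using T1[OF t2 fs mf] assoc[OF sA f mf] by simp
    then obtain h' where "h' \<in> H WA MF" "cp mf f = cp h' wA" using T2[OF t1 sA wA mff] by blast
    thus ?thesis using FTI[of WA W wA A h' MF] WA wA W_def by simp
  qed
  have P1: "qcmp C W (qcls C W mf) (qcls C W f) = qcls C W (zr A MF)"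
    using qcmp_cls[OF sW f mf] qcls_zero[OF sW mff] ftmf by simp
  have P2: "bij_betw (\<lambda>\<gamma>. qcmp C W \<gamma> (qcls C W mf)) (qhom C W MF Y)
             {\<beta> \<in> qhom C W B Y. qcmp C W \<beta> (qcls C W f) = qcls C W (zr A Y)}"
    if Y: "Y \<in> Cplus C T U V" for Y
  proof -
    obtain u1 v1 w1 where tY: "(u1,v1,w1) \<in> ttri C" and W1: "tdm C u1 \<in> W" and cu1: "tcd C u1 = Y"
      and cv1: "tcd C v1 \<in> sh ` V" and Yo: "Y \<in> Ob"
      using Y unfolding Cplus_def star_def W_def by blast
    define W1 where "W1 = tdm C u1"
    obtain V1 where V1: "V1 \<in> V" and cv1': "tcd C v1 = sh V1" using cv1 by blast
    have u1: "u1 \<in> H W1 Y" using tri_homs(1)[OF tY] cu1 W1_def by simp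
    have v1: "v1 \<in> H Y (sh V1)" using tri_homs(2)[OF tY] cu1 cv1' by simp
    have core: "factors_through C W g" if g: "g \<in> H MF Y" and fg: "factors_through C W (cp g mf)" for g
    proof -
      obtain W0 a b where W0: "W0 \<in> W" and a: "a \<in> H B W0" and b: "b \<in> H W0 Y" and gab: "cp g mf = cp b a"
        using FTE[OF comp_hom[OF mf g] fg] by blast
      have W0T: "W0 \<in> T" using W0 unfolding W_def by simp
      have "cp a (cp f sA) = zr X W0" using XW[OF W0T comp_hom[OF fs a]] .
      then obtain a' where a': "a' \<in> H MF W0" and aa: "a = cp a' mf" using T2[OF t2 fs mf a] by blast
      define k where "k = pl g (ng (cp b a'))"
      have ba': "cp b a' \<in> H MF Y" using a' b by blast
      have kh: "k \<in> H MF Y" using k_def g ba' by blast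
      have "cp k mf = pl (cp g mf) (ng (cp (cp b a') mf))"
        unfolding k_def using comp_pl_l[OF mf g ng_hom[OF ba']] comp_ng_l[OF mf ba'] by simp
      also have "\<dots> = zr B Y" using gab aa assoc[OF mf a' b] pl_ng comp_hom[OF a b] by simp
      finally have kz: "cp k mf = zr B Y" .
      obtain c where c: "c \<in> H (sh X) Y" and kc: "k = cp c t" using T2[OF rt2 mf th kh kz] by blast
      have "cp v1 c = zr (sh X) (sh V1)" using ext0[OF eSV SA V1] comp_hom[OF c v1] by blast
      then obtain c' where c': "c' \<in> H (sh X) W1" and cc: "c = cp u1 c'" using T3[OF tY u1 v1 c] by blast
      have fc: "factors_through C W c" using FTI[of W1 W c' "sh X" u1 Y] W1 W1_def c' u1 cc by simp
      have fk: "factors_through C W k" using ft_comp_r[OF c fc th] kc by simp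
      have fb: "factors_through C W (cp b a')" using FTI[OF W0 a' b] .
      have "factors_through C W (pl k (cp b a'))" using ft_pl[OF sW kh fk ba' fb] .
      moreover have "pl k (cp b a') = g"
        unfolding k_def using pl_assoc[OF g ng_hom[OF ba'] ba'] pl_comm[OF ng_hom[OF ba'] ba'] pl_ng[OF ba']
          pl_zr[OF g] by simp
      ultimately show ?thesis by simp
    qed
    have img: "(\<lambda>\<gamma>. qcmp C W \<gamma> (qcls C W mf)) (qcls C W g) = qcls C W (cp g mf)" if "g \<in> H MF Y" for g
      using qcmp_cls[OF sW mf that] by simp
    show ?thesis unfolding bij_betw_def
    proof
      show "inj_on (\<lambda>\<gamma>. qcmp C W \<gamma> (qcls C W mf)) (qhom C W MF Y)"
      proof (rule inj_onI)
        fix x y assume x: "x \<in> qhom C W MF Y" and y: "y \<in> qhom C W MF Y"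
          and e: "qcmp C W x (qcls C W mf) = qcmp C W y (qcls C W mf)"
        have x': "x \<in> qcls C W ` H MF Y" using x qhom_eq[of W MF Y] by simp
        then obtain g1 where g1: "g1 \<in> H MF Y" "x = qcls C W g1" by (rule imageE) blast
        have y': "y \<in> qcls C W ` H MF Y" using y qhom_eq[of W MF Y] by simp
        then obtain g2 where g2: "g2 \<in> H MF Y" "y = qcls C W g2" by (rule imageE) blast
        have "qcls C W (cp g1 mf) = qcls C W (cp g2 mf)" using e img[OF g1(1)] img[OF g2(1)] g1(2) g2(2) by simp
        hence "factors_through C W (pl (cp g1 mf) (ng (cp g2 mf)))"
          using qcls_eq[OF sW comp_hom[OF mf g1(1)] comp_hom[OF mf g2(1)]] by simp
        moreover have "pl (cp g1 mf) (ng (cp g2 mf)) = cp (pl g1 (ng g2)) mf"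
          using comp_pl_l[OF mf g1(1) ng_hom[OF g2(1)]] comp_ng_l[OF mf g2(1)] by simp
        ultimately have "factors_through C W (pl g1 (ng g2))"
          using core[OF pl_hom[OF g1(1) ng_hom[OF g2(1)]]] by simp
        thus "x = y" using qcls_eq[OF sW g1(1) g2(1)] g1(2) g2(2) by simp
      qed
    next
      show "(\<lambda>\<gamma>. qcmp C W \<gamma> (qcls C W mf)) ` qhom C W MF Y =
        {\<beta> \<in> qhom C W B Y. qcmp C W \<beta> (qcls C W f) = qcls C W (zr A Y)}"
      proof (rule set_eqI, rule iffI)
        fix z assume "z \<in> (\<lambda>\<gamma>. qcmp C W \<gamma> (qcls C W mf)) ` qhom C W MF Y"
        then obtain \<gamma> where ga: "\<gamma> \<in> qhom C W MF Y" and z0: "z = qcmp C W \<gamma> (qcls C W mf)" by (rule imageE) blast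
        have "\<gamma> \<in> qcls C W ` H MF Y" using ga qhom_eq[of W MF Y] by simp
        then obtain g where g: "g \<in> H MF Y" and gg: "\<gamma> = qcls C W g" by (rule imageE) blast
        have z: "z = qcls C W (cp g mf)" using z0 gg img[OF g] by simp
        have gm: "cp g mf \<in> H B Y" using g mf by blast
        have "factors_through C W (cp g (cp mf f))" using ft_comp_l[OF mff ftmf g] .
        hence "factors_through C W (cp (cp g mf) f)" using assoc[OF f mf g] by simp
        hence "qcmp C W z (qcls C W f) = qcls C W (zr A Y)"
          using z qcmp_cls[OF sW f gm] qcls_zero[OF sW comp_hom[OF f gm]] by simp
        thus "z \<in> {\<beta> \<in> qhom C W B Y. qcmp C W \<beta> (qcls C W f) = qcls C W (zr A Y)}"
          using z gm qhom_eq[of W B Y] by blast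
      next
        fix z assume zz: "z \<in> {\<beta> \<in> qhom C W B Y. qcmp C W \<beta> (qcls C W f) = qcls C W (zr A Y)}"
        then obtain b where b: "b \<in> H B Y" and z: "z = qcls C W b"
          and e: "qcmp C W z (qcls C W f) = qcls C W (zr A Y)"
        proof -
          have "z \<in> qcls C W ` H B Y" and e0: "qcmp C W z (qcls C W f) = qcls C W (zr A Y)"
            using zz qhom_eq[of W B Y] by auto
          thus ?thesis using that by blast
        qed
        have bf: "cp b f \<in> H A Y" using b f by blast
        have "factors_through C W (cp b f)" using e z qcmp_cls[OF sW f b] qcls_zero[OF sW bf] by simp
        then obtain W0 x y where W0: "W0 \<in> W" and x: "x \<in> H A W0" and y: "y \<in> H W0 Y" and bfe: "cp b f = cp y x"
          using FTE[OF bf] by blast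
        have W0T: "W0 \<in> T" using W0 unfolding W_def by simp
        have xs: "cp x sA = zr X W0" using XW[OF W0T comp_hom[OF sA x]] .
        have "cp b (cp f sA) = cp y (cp x sA)" using assoc[OF sA f b] assoc[OF sA x y] bfe by simp
        hence "cp b (cp f sA) = zr X Y" using xs comp_zr_r[OF y Xo] by simp
        then obtain g where g: "g \<in> H MF Y" and bg: "b = cp g mf" using T2[OF t2 fs mf b] by blast
        have "qcls C W g \<in> qhom C W MF Y" using g qhom_eq[of W MF Y] by simp
        moreover have "z = (\<lambda>\<gamma>. qcmp C W \<gamma> (qcls C W mf)) (qcls C W g)" using img[OF g] z bg by simp
        ultimately show "z \<in> (\<lambda>\<gamma>. qcmp C W \<gamma> (qcls C W mf)) ` qhom C W MF Y" by blast
      qed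
    qed
  qed
  have P3: "MF \<in> Cminus C S T U" if Bm: "B \<in> Cminus C S T U"
  proof -
    obtain sB vB wB where tB: "(sB,vB,wB) \<in> ttri C" and XB: "tdm C sB \<in> shift_inv C S" and csB: "tcd C sB = B"
      and WB: "tcd C vB \<in> T \<inter> U"
      using Bm unfolding Cminus_def star_def by blast
    define XB where "XB = tdm C sB"
    define WB where "WB = tcd C vB"
    have sB: "sB \<in> H XB B" using tri_homs(1)[OF tB] csB XB_def by simp
    have vB: "vB \<in> H B WB" using tri_homs(2)[OF tB] csB WB_def by simp
    have sXB: "sh XB \<in> S" using XB XB_def unfolding shift_inv_def by simp
    obtain a b c X' T1 where ta: "(a,b,c) \<in> ttri C" and a: "a \<in> H X' MF" and X'o: "X' \<in> Ob"
      and sX': "sh X' \<in> S" and b: "b \<in> H MF T1" and T1: "T1 \<in> T"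
      using SC[OF cST MFo] by blast
    have ch: "c \<in> H T1 (sh X')" using tri_hom3[OF ta a b] .
    have T1U: "T1 \<in> U"
    proof (rule perp[OF cUV])
      show "T1 \<in> Ob" using b hom_obj by blast
    next
      fix V' y assume V': "V' \<in> V" and y: "y \<in> H T1 (sh V')"
      have bms: "cp b (cp mf sB) = zr XB T1" using ext0m[OF eST sXB T1] comp_hom[OF comp_hom[OF sB mf] b] by blast
      define h where "h = cp y (cp b mf)"
      have hh: "h \<in> H B (sh V')" using h_def y b mf by blast
      have "cp h sB = cp y (cp b (cp mf sB))" unfolding h_def
        using assoc[OF sB mf b] assoc[OF sB comp_hom[OF mf b] y] by simp
      hence "cp h sB = zr XB (sh V')" using bms comp_zr_r[OF y] sB hom_obj by simp
      then obtain h' where h': "h' \<in> H WB (sh V')" and hv: "h = cp h' vB" using T2[OF tB sB vB hh] by blast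
      have "h' = zr WB (sh V')" using ext0[OF eUV _ V' h'] WB WB_def by simp
      hence hz: "h = zr B (sh V')" using hv comp_zr_l[OF vB] hh hom_obj by metis
      have yb: "cp y b \<in> H MF (sh V')" using y b by blast
      have "cp (cp y b) mf = zr B (sh V')" using hz h_def assoc[OF mf b y] by simp
      then obtain y' where y': "y' \<in> H (sh X) (sh V')" and ye: "cp y b = cp y' t"
        using T2[OF rt2 mf th yb] by blast
      have "y' = zr (sh X) (sh V')" using ext0[OF eSV SA V' y'] .
      hence ybz: "cp y b = zr MF (sh V')" using ye comp_zr_l[OF th] y' hom_obj by metis
      obtain y'' where y'': "y'' \<in> H (sh X') (sh V')" and yy: "y = cp y'' c"
        using T2[OF rot[OF ta] b ch y ybz] by blast
      have "y'' = zr (sh X') (sh V')" using ext0[OF eSV sX' V' y''] .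
      thus "y = zr T1 (sh V')" using yy comp_zr_l[OF ch] y'' hom_obj by metis
    qed
    show ?thesis unfolding Cminus_def star_def shift_inv_def
      using MFo ta a b T1 T1U X'o sX' hom_dom[OF a] hom_cod[OF a] hom_cod[OF b] by blast
  qed
  show ?thesis using P1 P2 P3 W_def by blast
qed

end
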